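(* For $\alpha>0$ and $x>0$, $$G(x;\alpha)=\lim_{n\to\infty}\Bigl(1+\frac n\alpha\Bigr)^{\frac{(x-1)(x-2\alpha)}{2\alpha}}\Gamma\Bigl(1+\frac n\alpha\Bigr)^{x-1}\prod_{k=0}^{n-1}\frac{\Gamma\bigl(\frac{1+k}{\alpha}\bigr)}{\Gamma\bigl(\frac{x+k}{\alpha}\bigr)} .$$
   Context: For $\alpha>0$, $\operatorname{Re}x>0$, $G(x;\alpha)$ is defined by $\ln G(x;\alpha)=\int_0^\infty\frac{e^{-\alpha u}}{u}\bigl\{\frac{(x-1)(x-2\alpha)}{2\alpha}-\frac{x-1}{1-e^{-\alpha u}}+\frac{e^{-(1-\alpha)u}-e^{-(x-\alpha)u}}{(1-e^{-u})(1-e^{-\alpha u})}\bigr\}du$. *)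

theory Defs
  imports "HOL-Analysis.Analysis"
begin

definition lnG_integrand :: "real \<Rightarrow> real \<Rightarrow> real \<Rightarrow> real" where
  "lnG_integrand x \<alpha> u =
     exp (- \<alpha> * u) / u *
       ((x - 1) * (x - 2 * \<alpha>) / (2 * \<alpha>)
        - (x - 1) / (1 - exp (- \<alpha> * u))
        + (exp (- (1 - \<alpha>) * u) - exp (- (x - \<alpha>) * u))
            / ((1 - exp (- u)) * (1 - exp (- \<alpha> * u))))"

definition G :: "real \<Rightarrow> real \<Rightarrow> real" where
  "G x \<alpha> = exp (LBINT u:{0<..}. lnG_integrand x \<alpha> u)"

end

theory Submission
  imports Defs
begin


lemma expsum_deriv:
  fixes ps :: "(real \<times> real) list"
  shows
  "((\<lambda>v. \<Sum>p\<leftarrow>ps. fst p * (- snd p)^m * exp (- snd p * v)) has_real_derivative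
     (\<Sum>p\<leftarrow>ps. fst p * (- snd p)^Suc m * exp (- snd p * v))) (at v)"
  by (induction ps) (auto intro!: derivative_eq_intros simp: algebra_simps)

lemma expsum_diff_bound:
  fixes ps :: "(real \<times> real) list"
  assumes "\<forall>p\<in>set ps. snd p > 0" "t \<ge> 0"
  shows "\<bar>\<Sum>p\<leftarrow>ps. fst p * (- snd p)^n * exp (- snd p * t)\<bar> \<le> (\<Sum>p\<leftarrow>ps. \<bar>fst p\<bar> * snd p ^ n)"
  using assms
proof (induction ps)
  case Nil thus ?case by simp
next
  case (Cons p ps)
  have l: "snd p > 0" using Cons by auto
  have "\<bar>fst p * (- snd p)^n * exp (- snd p * t)\<bar> = \<bar>fst p\<bar> * snd p ^ n * exp (- snd p * t)"
    using l by (simp add: abs_mult power_abs)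
  also have "\<dots> \<le> \<bar>fst p\<bar> * snd p ^ n * 1"
    using l Cons.prems(2) by (intro mult_left_mono) auto
  finally have h: "\<bar>fst p * (- snd p)^n * exp (- snd p * t)\<bar> \<le> \<bar>fst p\<bar> * snd p ^ n" by simp
  have "\<bar>\<Sum>p\<leftarrow>ps. fst p * (- snd p)^n * exp (- snd p * t)\<bar> \<le> (\<Sum>p\<leftarrow>ps. \<bar>fst p\<bar> * snd p ^ n)"
    using Cons by auto
  with h show ?case by (simp add: abs_triangle_ineq order_trans[OF abs_triangle_ineq])
qed

lemma expsum_at0:
  fixes ps :: "(real \<times> real) list"
  shows "(\<Sum>p\<leftarrow>ps. fst p * (- snd p)^m * exp (- snd p * 0)) = (-1)^m * (\<Sum>p\<leftarrow>ps. fst p * snd p ^ m)"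
proof (induction ps)
  case (Cons p ps)
  have "(- snd p)^m = (-1)^m * snd p ^ m" by (rule power_minus)
  with Cons show ?case by (simp add: distrib_left)
qed simp

lemma expsum_small:
  fixes ps :: "(real \<times> real) list"
  assumes pos: "\<forall>p\<in>set ps. snd p > 0" and mom: "\<forall>m<n. (\<Sum>p\<leftarrow>ps. fst p * snd p ^ m) = 0"
    and v: "0 < v"
  shows "\<bar>\<Sum>p\<leftarrow>ps. fst p * exp (- snd p * v)\<bar> \<le> (\<Sum>p\<leftarrow>ps. \<bar>fst p\<bar> * snd p ^ n) / fact n * v ^ n"
proof -
  define diff where "diff = (\<lambda>m v. \<Sum>p\<leftarrow>ps. fst p * (- snd p)^m * exp (- snd p * v))"
  have d0: "diff 0 = (\<lambda>v. \<Sum>p\<leftarrow>ps. fst p * exp (- snd p * v))"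
    by (simp add: diff_def)
  have D: "\<forall>m t. m < n \<and> 0 \<le> t \<and> t \<le> v \<longrightarrow> (diff m has_real_derivative diff (Suc m) t) (at t)"
    unfolding diff_def by (intro allI impI expsum_deriv)
  have M: "\<exists>t>0. t \<le> v \<and> diff 0 v = (\<Sum>m<n. diff m 0 / fact m * v ^ m) + diff n t / fact n * v ^ n"
    by (rule Maclaurin2[where diff=diff and n=n and f="diff 0", OF v refl D])
  from M obtain t where tt: "0 < t \<and> t \<le> v \<and>
    diff 0 v = (\<Sum>m<n. diff m 0 / fact m * v ^ m) + diff n t / fact n * v ^ n" ..
  note t = conjunct1[OF tt] conjunct1[OF conjunct2[OF tt]]
  note eq0 = conjunct2[OF conjunct2[OF tt]]
  have eq: "(\<Sum>p\<leftarrow>ps. fst p * exp (- snd p * v)) = (\<Sum>m<n. diff m 0 / fact m * v ^ m) + diff n t / fact n * v ^ n"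
  proof -
    have e1: "diff 0 v = (\<Sum>p\<leftarrow>ps. fst p * exp (- snd p * v))" by (simp add: d0)
    show ?thesis by (rule trans[OF sym[OF e1] eq0])
  qed
  have z: "diff m 0 = 0" if "m < n" for m
  proof -
    have "diff m 0 = (-1)^m * (\<Sum>p\<leftarrow>ps. fst p * snd p ^ m)"
      unfolding diff_def by (rule expsum_at0)
    thus ?thesis using mom that by simp
  qed
  have s0: "(\<Sum>m<n. diff m 0 / fact m * v ^ m) = 0"
    by (rule sum.neutral) (simp add: z)
  have "\<bar>\<Sum>p\<leftarrow>ps. fst p * exp (- snd p * v)\<bar> = \<bar>diff n t\<bar> / fact n * v ^ n"
    unfolding eq s0 using v by (simp add: abs_mult)
  also have "\<dots> \<le> (\<Sum>p\<leftarrow>ps. \<bar>fst p\<bar> * snd p ^ n) / fact n * v ^ n"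
    using expsum_diff_bound[OF pos, of t n] t v unfolding diff_def
    by (intro mult_right_mono divide_right_mono) auto
  finally show ?thesis .
qed

lemma expsum_large:
  fixes ps :: "(real \<times> real) list"
  assumes "\<forall>p\<in>set ps. snd p \<ge> \<delta>" "v \<ge> 0"
  shows "\<bar>\<Sum>p\<leftarrow>ps. fst p * exp (- snd p * v)\<bar> \<le> (\<Sum>p\<leftarrow>ps. \<bar>fst p\<bar>) * exp (- \<delta> * v)"
  using assms
proof (induction ps)
  case Nil thus ?case by simp
next
  case (Cons p ps)
  have "exp (- snd p * v) \<le> exp (- \<delta> * v)" using Cons.prems by (auto intro: mult_right_mono)
  hence h: "\<bar>fst p * exp (- snd p * v)\<bar> \<le> \<bar>fst p\<bar> * exp (- \<delta> * v)"
    by (simp add: abs_mult mult_left_mono)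
  have "\<bar>\<Sum>p\<leftarrow>ps. fst p * exp (- snd p * v)\<bar> \<le> (\<Sum>p\<leftarrow>ps. \<bar>fst p\<bar>) * exp (- \<delta> * v)"
    using Cons by auto
  with h show ?case by (simp add: distrib_right order_trans[OF abs_triangle_ineq])
qed

lemma exp_integrable:
  assumes "\<delta> > 0"
  shows "set_integrable lborel {0<..} (\<lambda>v::real. exp (- \<delta> * v))"
proof -
  have "((\<lambda>v::real. exp (- \<delta> * v)) has_integral exp (- \<delta> * 0) / \<delta>) {0..}"
    by (rule has_integral_exp_minus_to_infinity) fact
  from nn_integral_has_integral_lebesgue[OF _ this]
  have "(\<integral>\<^sup>+ x. ennreal (indicator {0..} x * exp (- \<delta> * x)) \<partial>lborel) = ennreal (1/\<delta>)" by simp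
  hence "integrable lborel (\<lambda>x. indicator {0..} x * exp (- \<delta> * x))"
    by (intro integrableI_nn_integral_finite) auto
  hence "set_integrable lborel {0..} (\<lambda>v::real. exp (- \<delta> * v))"
    by (simp add: set_integrable_def)
  thus ?thesis by (rule set_integrable_subset) auto
qed



lemma quot_integrable:
  fixes ps :: "(real \<times> real) list" and F D :: "real \<Rightarrow> real"
  assumes \<delta>: "\<delta> > 0" and ps: "\<forall>p\<in>set ps. snd p \<ge> \<delta>"
    and mom: "\<forall>m<n. (\<Sum>p\<leftarrow>ps. fst p * snd p ^ m) = 0"
    and d: "d > 0" and Dsmall: "\<And>v. 0 < v \<Longrightarrow> v \<le> 1 \<Longrightarrow> D v \<ge> d * v ^ n"
    and Dlarge: "\<And>v. v \<ge> 1 \<Longrightarrow> D v \<ge> d"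
    and meas: "F \<in> borel_measurable borel"
    and eq: "\<And>v. v > 0 \<Longrightarrow> F v = (\<Sum>p\<leftarrow>ps. fst p * exp (- snd p * v)) / D v"
  shows "set_integrable lborel {0<..} F"
proof -
  define K1 where "K1 = (\<Sum>p\<leftarrow>ps. \<bar>fst p\<bar> * snd p ^ n) / fact n"
  define K2 where "K2 = (\<Sum>p\<leftarrow>ps. \<bar>fst p\<bar>)"
  define C where "C = (K1 * exp \<delta> + K2) / d"
  have pos: "\<forall>p\<in>set ps. snd p > 0" using ps \<delta> by force
  have K1: "K1 \<ge> 0" unfolding K1_def
    by (intro divide_nonneg_pos sum_list_nonneg) (use pos in \<open>auto intro!: mult_nonneg_nonneg\<close>)
  have K2: "K2 \<ge> 0" unfolding K2_def by (intro sum_list_nonneg) auto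
  have bound: "\<bar>F v\<bar> \<le> C * exp (- \<delta> * v)" if v: "v > 0" for v
  proof (cases "v \<le> 1")
    case True
    have Dp: "D v \<ge> d * v ^ n" using Dsmall[OF v True] .
    have dv: "d * v ^ n > 0" using d v by simp
    have "\<bar>F v\<bar> = \<bar>\<Sum>p\<leftarrow>ps. fst p * exp (- snd p * v)\<bar> / D v"
      using eq[OF v] Dp dv by simp
    also have "\<dots> \<le> (K1 * v ^ n) / (d * v ^ n)"
      using expsum_small[OF pos mom v] Dp dv unfolding K1_def
      by (intro frac_le) auto
    also have "\<dots> = K1 / d" using v by simp
    also have "\<dots> \<le> K1 * (exp \<delta> * exp (- \<delta> * v)) / d"
    proof -
      have "exp \<delta> * exp (- \<delta> * v) = exp (\<delta> * (1 - v))" by (simp add: exp_add[symmetric] algebra_simps)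
      also have "\<dots> \<ge> 1" using True \<delta> by simp
      finally have "K1 * 1 \<le> K1 * (exp \<delta> * exp (- \<delta> * v))" using K1 by (intro mult_left_mono)
      thus ?thesis using d by (intro divide_right_mono) auto
    qed
    also have "\<dots> \<le> C * exp (- \<delta> * v)" unfolding C_def using K2 d
      by (simp add: field_simps)
    finally show ?thesis .
  next
    case False
    have Dp: "D v \<ge> d" using Dlarge[of v] False by simp
    have "\<bar>F v\<bar> = \<bar>\<Sum>p\<leftarrow>ps. fst p * exp (- snd p * v)\<bar> / D v"
      using eq[OF v] Dp d by simp
    also have "\<dots> \<le> (K2 * exp (- \<delta> * v)) / d"
      using expsum_large[OF ps, of v] Dp d v unfolding K2_def
      by (intro frac_le) auto
    also have "\<dots> \<le> C * exp (- \<delta> * v)" unfolding C_def using K1 d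
      by (simp add: field_simps)
    finally show ?thesis .
  qed
  have "set_integrable lborel {0<..} (\<lambda>v. C * exp (- \<delta> * v))"
    using exp_integrable[OF \<delta>] by (rule set_integrable_mult_right)
  moreover have "set_borel_measurable lborel {0<..} F"
    unfolding set_borel_measurable_def using meas by measurable
  moreover have "AE v in lborel. v \<in> {0<..} \<longrightarrow> norm (F v) \<le> norm (C * exp (- \<delta> * v))"
  proof (rule AE_I2, rule impI)
    fix v :: real assume "v \<in> {0<..}"
    hence "\<bar>F v\<bar> \<le> C * exp (- \<delta> * v)" using bound by simp
    thus "norm (F v) \<le> norm (C * exp (- \<delta> * v))" by simp
  qed
  ultimately show ?thesis by (rule set_integrable_bound)
qed



lemma one_minus_exp_small:
  fixes a v :: real assumes a: "a > 0" and v: "0 < v" "v \<le> 1"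
  shows "1 - exp (- a * v) \<ge> (a * exp (- a)) * v"
proof -
  have t: "a * v \<le> a" using a v by (simp add: mult_left_le)
  have "exp (a * v) \<ge> 1 + a * v" by (rule exp_ge_add_one_self_aux) (use a v in simp)
  hence "1 \<ge> (1 + a * v) * exp (- a * v)"
    by (metis exp_minus_inverse mult_minus_left mult_right_mono exp_ge_zero order_trans mult.commute order_refl)
  hence "1 - exp (- a * v) \<ge> a * v * exp (- a * v)" by (simp add: algebra_simps)
  moreover have "exp (- a * v) \<ge> exp (- a)" using t by simp
  hence "a * v * exp (- a * v) \<ge> a * v * exp (- a)" using a v by (intro mult_left_mono) auto
  ultimately show ?thesis by (simp add: algebra_simps)
qed

lemma one_minus_exp_large:
  fixes a v :: real assumes a: "a > 0" and v: "v \<ge> 1"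
  shows "1 - exp (- a * v) \<ge> 1 - exp (- a)"
  using a v by (simp add: mult_le_cancel_left1)

lemma one_minus_exp_pos:
  fixes a v :: real assumes a: "a > 0" and v: "v > 0"
  shows "1 - exp (- a * v) > 0"
  using a v by simp

definition Fr :: "real \<Rightarrow> real \<Rightarrow> real \<Rightarrow> real" where
  "Fr a b v = (exp (- a * v) - exp (- b * v)) / v"

lemma Fr_integrable:
  assumes a: "a > 0" and b: "b > 0"
  shows "set_integrable lborel {0<..} (Fr a b)"
proof (rule quot_integrable[where ps="[(1,a),(-1,b)]" and n=1 and \<delta>="min a b" and d=1 and D="\<lambda>v. v"])
  show "Fr a b \<in> borel_measurable borel" unfolding Fr_def by measurable
qed (use a b in \<open>auto simp: Fr_def\<close>)



definition Em :: "real \<Rightarrow> real \<Rightarrow> real \<Rightarrow> real" where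
  "Em \<alpha> z v = ((z - 1) * exp (- \<alpha> * v) - (exp (- \<alpha> * v) - exp (- (z * \<alpha>) * v)) / (1 - exp (- \<alpha> * v))) / v"

lemma Em_integrable:
  assumes a: "\<alpha> > 0" and z: "z > 0"
  shows "set_integrable lborel {0<..} (Em \<alpha> z)"
proof (rule quot_integrable[where ps="[(z-1,\<alpha>),(-(z-1),2*\<alpha>),(-1,\<alpha>),(1,z*\<alpha>)]" and n=2
      and \<delta>="min \<alpha> (z*\<alpha>)" and d="min (\<alpha> * exp (- \<alpha>)) (1 - exp (- \<alpha>))" and D="\<lambda>v. v * (1 - exp (- \<alpha> * v))"])
  show "Em \<alpha> z \<in> borel_measurable borel" unfolding Em_def by measurable
  show "min \<alpha> (z*\<alpha>) > 0" using a z by simp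
  show "\<forall>p\<in>set [(z-1,\<alpha>),(-(z-1),2*\<alpha>),(-1,\<alpha>),(1,z*\<alpha>)]. snd p \<ge> min \<alpha> (z*\<alpha>)"
    using a z by auto
  show "\<forall>m<2. (\<Sum>p\<leftarrow>[(z-1,\<alpha>),(-(z-1),2*\<alpha>),(-1,\<alpha>),(1,z*\<alpha>)]. fst p * snd p ^ m) = 0"
    by (auto simp: less_Suc_eq numeral_2_eq_2 algebra_simps)
  show "min (\<alpha> * exp (- \<alpha>)) (1 - exp (- \<alpha>)) > 0" using a by simp
  show "v * (1 - exp (- \<alpha> * v)) \<ge> min (\<alpha> * exp (- \<alpha>)) (1 - exp (- \<alpha>)) * v ^ 2"
    if "0 < v" "v \<le> 1" for v
  proof -
    have "1 - exp (- \<alpha> * v) \<ge> min (\<alpha> * exp (- \<alpha>)) (1 - exp (- \<alpha>)) * v"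
      using one_minus_exp_small[OF a that] that by (smt (verit) min.cobounded1 mult_right_mono)
    hence "v * (1 - exp (- \<alpha> * v)) \<ge> v * (min (\<alpha> * exp (- \<alpha>)) (1 - exp (- \<alpha>)) * v)"
      using that by (intro mult_left_mono) auto
    thus ?thesis by (simp add: power2_eq_square mult_ac)
  qed
  show "v * (1 - exp (- \<alpha> * v)) \<ge> min (\<alpha> * exp (- \<alpha>)) (1 - exp (- \<alpha>))" if "v \<ge> 1" for v
  proof -
    have h: "1 - exp (- \<alpha> * v) \<ge> 1 - exp (- \<alpha>)" using one_minus_exp_large[OF a that] .
    have "1 - exp (- \<alpha>) \<ge> 0" using a by simp
    hence "v * (1 - exp (- \<alpha> * v)) \<ge> 1 * (1 - exp (- \<alpha>))" using h that
      by (intro mult_mono) auto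
    thus ?thesis by simp
  qed
  show "Em \<alpha> z v = (\<Sum>p\<leftarrow>[(z-1,\<alpha>),(-(z-1),2*\<alpha>),(-1,\<alpha>),(1,z*\<alpha>)]. fst p * exp (- snd p * v)) / (v * (1 - exp (- \<alpha> * v)))"
    if v: "v > 0" for v
  proof -
    have A: "1 - exp (- \<alpha> * v) \<noteq> 0" using one_minus_exp_pos[OF a v] by linarith
    have e2: "exp (- (2*\<alpha>) * v) = exp (- \<alpha> * v) * exp (- \<alpha> * v)"
      by (simp add: exp_add[symmetric])
    show ?thesis unfolding Em_def
      apply (simp only: sum_list.Cons sum_list.Nil list.map fst_conv snd_conv e2)
      using A v by (simp add: field_simps)
  qed
qed



lemma Fr_inner:
  assumes ab: "a \<le> b" and v: "v > 0"
  shows "((\<lambda>t. exp (- t * v)) has_integral Fr a b v) {a..b}"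
proof -
  have "((\<lambda>t. exp (- t * v)) has_integral ((\<lambda>t. - exp (- t * v) / v) b - (\<lambda>t. - exp (- t * v) / v) a)) {a..b}"
  proof (rule fundamental_theorem_of_calculus[OF ab])
    fix t assume "t \<in> {a..b}"
    have "((\<lambda>t. - exp (- t * v) / v) has_real_derivative exp (- t * v)) (at t within {a..b})"
      using v by (auto intro!: derivative_eq_intros)
    thus "((\<lambda>t. - exp (- t * v) / v) has_vector_derivative exp (- t * v)) (at t within {a..b})"
      by (simp add: has_real_derivative_iff_has_vector_derivative)
  qed
  thus ?thesis by (simp add: Fr_def diff_divide_distrib)
qed

lemma exp_nn:
  assumes t: "t > 0"
  shows "(\<integral>\<^sup>+v. ennreal (indicator {0<..} v * exp (- t * v)) \<partial>lborel) = ennreal (1 / t)"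
proof -
  have "((\<lambda>v::real. exp (- t * v)) has_integral exp (- t * 0) / t) {0..}"
    by (rule has_integral_exp_minus_to_infinity) fact
  from nn_integral_has_integral_lebesgue[OF _ this]
  have *: "(\<integral>\<^sup>+ v. ennreal (indicator {0..} v * exp (- t * v)) \<partial>lborel) = ennreal (1/t)" by simp
  have "(\<integral>\<^sup>+v. ennreal (indicator {0<..} v * exp (- t * v)) \<partial>lborel) =
        (\<integral>\<^sup>+ v. ennreal (indicator {0..} v * exp (- t * v)) \<partial>lborel)"
    by (rule nn_integral_cong_AE) (use AE_lborel_singleton[of 0] in \<open>eventually_elim, auto simp: indicator_def\<close>)
  with * show ?thesis by simp
qed

lemma ln_nn:
  assumes a: "0 < a" and ab: "a \<le> b"
  shows "(\<integral>\<^sup>+t. ennreal (indicator {a..b} t * (1 / t)) \<partial>lborel) = ennreal (ln b - ln a)"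
proof -
  have "((\<lambda>t. 1 / t) has_integral (ln b - ln a)) {a..b}"
  proof (rule fundamental_theorem_of_calculus[OF ab])
    fix t assume t: "t \<in> {a..b}"
    hence "t > 0" using a by auto
    hence "(ln has_real_derivative 1 / t) (at t within {a..b})"
      by (auto intro!: derivative_eq_intros)
    thus "(ln has_vector_derivative 1 / t) (at t within {a..b})"
      by (simp add: has_real_derivative_iff_has_vector_derivative)
  qed
  from nn_integral_has_integral_lebesgue[OF _ this] show ?thesis using a by simp
qed

lemma Frullani_nn:
  assumes a: "0 < a" and ab: "a \<le> b"
  shows "(\<integral>\<^sup>+v. ennreal (indicator {0<..} v * Fr a b v) \<partial>lborel) = ennreal (ln b - ln a)"
proof -
  have step1: "ennreal (indicator {0<..} v * Fr a b v) =
      (\<integral>\<^sup>+t. ennreal (indicator {0<..} v * (indicator {a..b} t * exp (- t * v))) \<partial>lborel)" for v :: real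
  proof (cases "v > 0")
    case True
    from nn_integral_has_integral_lebesgue[OF _ Fr_inner[OF ab True]]
    show ?thesis using True by simp
  next
    case False thus ?thesis by simp
  qed
  have step2: "(\<integral>\<^sup>+v. ennreal (indicator {0<..} v * (indicator {a..b} t * exp (- t * v))) \<partial>lborel)
      = ennreal (indicator {a..b} t * (1 / t))" for t :: real
  proof (cases "t \<in> {a..b}")
    case True
    hence "t > 0" using a by auto
    have "(\<integral>\<^sup>+v. ennreal (indicator {0<..} v * (indicator {a..b} t * exp (- t * v))) \<partial>lborel)
       = (\<integral>\<^sup>+v. ennreal (indicator {0<..} v * exp (- t * v)) \<partial>lborel)"
      using True by simp
    also have "\<dots> = ennreal (1 / t)" by (rule exp_nn) fact
    finally show ?thesis using True by simp
  next
    case False thus ?thesis by simp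
  qed
  have "(\<integral>\<^sup>+v. ennreal (indicator {0<..} v * Fr a b v) \<partial>lborel) =
      (\<integral>\<^sup>+v. (\<integral>\<^sup>+t. ennreal (indicator {0<..} v * (indicator {a..b} t * exp (- t * v))) \<partial>lborel) \<partial>lborel)"
    by (simp only: step1)
  also have "\<dots> = (\<integral>\<^sup>+t. (\<integral>\<^sup>+v. ennreal (indicator {0<..} v * (indicator {a..b} t * exp (- t * v))) \<partial>lborel) \<partial>lborel)"
    by (rule lborel_pair.Fubini') measurable
  also have "\<dots> = (\<integral>\<^sup>+t. ennreal (indicator {a..b} t * (1 / t)) \<partial>lborel)"
    by (simp only: step2)
  also have "\<dots> = ennreal (ln b - ln a)" by (rule ln_nn) fact+
  finally show ?thesis .
qed

lemma Frullani_le: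
  assumes a: "0 < a" and ab: "a \<le> b"
  shows "(LBINT v:{0<..}. Fr a b v) = ln b - ln a"
proof -
  have nonneg: "0 \<le> indicator {0<..} v * Fr a b v" for v :: real
  proof (cases "v > 0")
    case True
    have "exp (- b * v) \<le> exp (- a * v)" using ab True by (simp add: mult_right_mono)
    thus ?thesis using True by (simp add: Fr_def divide_nonneg_pos)
  qed simp
  have m: "(\<lambda>v. indicator {0<..} v * Fr a b v) \<in> borel_measurable lborel"
    unfolding Fr_def by measurable
  have "ln b - ln a \<ge> 0" using a ab by simp
  from Frullani_nn[OF a ab] nn_integral_eq_integrable[OF m _ this] nonneg
  have "integral\<^sup>L lborel (\<lambda>v. indicator {0<..} v * Fr a b v) = ln b - ln a" by simp
  thus ?thesis by (simp add: set_lebesgue_integral_def)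
qed

lemma Frullani:
  assumes a: "0 < a" and b: "0 < b"
  shows "(LBINT v:{0<..}. Fr a b v) = ln b - ln a"
proof (cases "a \<le> b")
  case True thus ?thesis using Frullani_le a by blast
next
  case False
  have "Fr a b = (\<lambda>v. - Fr b a v)" by (auto simp: Fr_def fun_eq_iff diff_divide_distrib)
  hence "(LBINT v:{0<..}. Fr a b v) = - (LBINT v:{0<..}. Fr b a v)"
    by (simp add: set_integral_uminus[OF Fr_integrable[OF b a]])
  also have "\<dots> = ln b - ln a" using Frullani_le[OF b] False by simp
  finally show ?thesis .
qed



definition Mal :: "real \<Rightarrow> real \<Rightarrow> real" where
  "Mal \<alpha> z = (LBINT v:{0<..}. Em \<alpha> z v)"

lemma Mal_1: "Mal \<alpha> 1 = 0"
  unfolding Mal_def Em_def by simp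

lemma Em_plus1:
  assumes a: "\<alpha> > 0" and v: "v > 0"
  shows "Em \<alpha> (z + 1) v = Em \<alpha> z v + Fr \<alpha> (z * \<alpha>) v"
proof -
  have A: "1 - exp (- \<alpha> * v) \<noteq> 0" using one_minus_exp_pos[OF a v] by linarith
  have e: "exp (- ((z + 1) * \<alpha>) * v) = exp (- (z * \<alpha>) * v) * exp (- \<alpha> * v)"
    by (simp add: exp_add[symmetric] algebra_simps)
  show ?thesis unfolding Em_def Fr_def
    apply (simp only: e)
    using A v by (simp add: field_simps)
qed

lemma Mal_plus1:
  assumes a: "\<alpha> > 0" and z: "z > 0"
  shows "Mal \<alpha> (z + 1) = ln z + Mal \<alpha> z"
proof -
  have "Mal \<alpha> (z + 1) = (LBINT v:{0<..}. Em \<alpha> z v + Fr \<alpha> (z * \<alpha>) v)"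
    unfolding Mal_def by (rule set_lebesgue_integral_cong) (auto simp: Em_plus1[OF a])
  also have "\<dots> = Mal \<alpha> z + (LBINT v:{0<..}. Fr \<alpha> (z * \<alpha>) v)"
    unfolding Mal_def using Em_integrable[OF a z] Fr_integrable[of \<alpha> "z*\<alpha>"] a z
    by (subst set_integral_add(2)) auto
  also have "(LBINT v:{0<..}. Fr \<alpha> (z * \<alpha>) v) = ln (z * \<alpha>) - ln \<alpha>"
    using a z by (intro Frullani) auto
  also have "\<dots> = ln z" using a z by (simp add: ln_mult)
  finally show ?thesis by simp
qed

lemma Em_convex:
  assumes a: "\<alpha> > 0" and v: "v > 0" and t: "0 \<le> t" "t \<le> 1"
  shows "Em \<alpha> ((1 - t) * x + t * y) v \<le> (1 - t) * Em \<alpha> x v + t * Em \<alpha> y v"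
proof -
  define A where "A = exp (- \<alpha> * v)"
  define K where "K = 1 / ((1 - A) * v)"
  have A1: "1 - A > 0" unfolding A_def using one_minus_exp_pos[OF a v] .
  have K: "K > 0" unfolding K_def using A1 v by simp
  have form: "Em \<alpha> z v = (z - 1) * A / v - A * K + K * exp (- (\<alpha> * v) * z)" for z
  proof -
    have e: "exp (- (z * \<alpha>) * v) = exp (- (\<alpha> * v) * z)" by (simp add: algebra_simps)
    have g: "((z-1)*A - (A - Q)/(1-A))/v = (z-1)*A / v - A*K + K*Q" for Q
    proof -
      have "((z-1)*A - (A - Q)/(1-A))/v = (z-1)*A / v - (A - Q)/((1-A)* v)"
        by (simp add: diff_divide_distrib)
      also have "(A - Q)/((1-A)* v) = A*K - K*Q"
        unfolding K_def by (simp add: diff_divide_distrib)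
      finally show ?thesis by simp
    qed
    show ?thesis unfolding Em_def e A_def[symmetric] by (rule g)
  qed
  have "exp (- (\<alpha> * v) * ((1 - t) * x + t * y)) = exp ((1 - t) *\<^sub>R (- (\<alpha> * v) * x) + t *\<^sub>R (- (\<alpha> * v) * y))"
    by (simp add: algebra_simps)
  also have "\<dots> \<le> (1 - t) * exp (- (\<alpha> * v) * x) + t * exp (- (\<alpha> * v) * y)"
    using convex_onD[OF exp_convex, of t "- (\<alpha> * v) * x" "- (\<alpha> * v) * y"] t by simp
  finally have ex: "exp (- (\<alpha> * v) * ((1 - t) * x + t * y)) \<le> (1 - t) * exp (- (\<alpha> * v) * x) + t * exp (- (\<alpha> * v) * y)" .
  have "K * exp (- (\<alpha> * v) * ((1 - t) * x + t * y)) \<le> K * ((1 - t) * exp (- (\<alpha> * v) * x) + t * exp (- (\<alpha> * v) * y))"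
    using ex K by (intro mult_left_mono) auto
  thus ?thesis unfolding form by (simp add: algebra_simps add_divide_distrib diff_divide_distrib)
qed

lemma Mal_convex:
  assumes a: "\<alpha> > 0"
  shows "convex_on {0<..} (Mal \<alpha>)"
proof (rule convex_onI)
  fix t x y :: real assume t: "t > 0" "t < 1" and xy: "x \<in> {0<..}" "y \<in> {0<..}"
  have z: "(1 - t) * x + t * y > 0" using t xy by (simp add: add_pos_pos)
  have "Mal \<alpha> ((1 - t) *\<^sub>R x + t *\<^sub>R y) = (LBINT v:{0<..}. Em \<alpha> ((1 - t) * x + t * y) v)"
    by (simp add: Mal_def)
  also have "\<dots> \<le> (LBINT v:{0<..}. (1 - t) * Em \<alpha> x v + t * Em \<alpha> y v)"
    using Em_integrable[OF a z] Em_integrable[OF a, of x] Em_integrable[OF a, of y] xy t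
    by (intro set_integral_mono) (auto intro!: Em_convex[OF a] set_integral_add set_integrable_mult_right)
  also have "\<dots> = (1 - t) * Mal \<alpha> x + t * Mal \<alpha> y"
    unfolding Mal_def using Em_integrable[OF a, of x] Em_integrable[OF a, of y] xy
    by (subst set_integral_add(2)) (auto intro!: set_integrable_mult_right)
  finally show "Mal \<alpha> ((1 - t) *\<^sub>R x + t *\<^sub>R y) \<le> (1 - t) * Mal \<alpha> x + t * Mal \<alpha> y" .
qed (rule convex_real_interval)

lemma Mal_eq:
  assumes a: "\<alpha> > 0" and z: "z > 0"
  shows "Mal \<alpha> z = ln (Gamma z)"
proof -
  have "exp (Mal \<alpha> z) = Gamma z"
  proof (rule Gamma_pos_real_unique[where G="\<lambda>z. exp (Mal \<alpha> z)"])
    show "exp (Mal \<alpha> 1) = 1" by (simp add: Mal_1)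
    show "exp (Mal \<alpha> (x + 1)) = x * exp (Mal \<alpha> x)" if "x > 0" for x
      using that by (simp add: Mal_plus1[OF a that] exp_add)
    show "convex_on {0<..} (ln \<circ> (\<lambda>z. exp (Mal \<alpha> z)))"
      using Mal_convex[OF a] by (simp add: o_def)
  qed (use z in auto)
  hence "ln (Gamma z) = Mal \<alpha> z" by (metis ln_exp)
  thus ?thesis by simp
qed



lemma exps_rewrite:
  fixes v \<alpha> x :: real
  shows "exp (- (\<alpha> + 1) * v) = exp (- \<alpha> * v) * exp (- v)"
    and "exp (- (2 * \<alpha>) * v) = exp (- \<alpha> * v) * exp (- \<alpha> * v)"
    and "exp (- (2 * \<alpha> + 1) * v) = exp (- \<alpha> * v) * exp (- \<alpha> * v) * exp (- v)"
    and "exp (- 1 * v) = exp (- v)"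
    and "exp (- (1 - \<alpha>) * u) = exp (- u) / exp (- \<alpha> * u)"
    and "exp (- (x - \<alpha>) * u) = exp (- x * u) / exp (- \<alpha> * u)"
  by (simp_all add: exp_add[symmetric] exp_diff[symmetric] algebra_simps)

lemma alg_I:
  fixes A q X c x v :: real
  assumes A: "A \<noteq> 0" "A \<noteq> 1" and q: "q \<noteq> 1" and v: "v \<noteq> 0"
  shows "A / v * (c - (x - 1) / (1 - A) + (q / A - X / A) / ((1 - q) * (1 - A)))
    = (c * A + (- c * (A * q) + (- c * (A * A) + (c * (A * A * q) + (- (x - 1) * A + ((x - 1) * (A * q) + (1 * q + (- 1) * X)))))))
      / (v * (1 - q) * (1 - A))"
proof -
  have A1: "1 - A \<noteq> 0" and q1: "1 - q \<noteq> 0" using A q by auto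
  have "q / A - X / A = (q - X) / A" by (simp add: diff_divide_distrib)
  hence "A / v * (c - (x - 1) / (1 - A) + (q / A - X / A) / ((1 - q) * (1 - A)))
     = (A * c * (1 - q) * (1 - A) - A * (x - 1) * (1 - q) + (q - X)) / (v * (1 - q) * (1 - A))"
    using A1 q1 A v by (simp add: divide_simps) (simp add: algebra_simps)
  also have "\<dots> = (c * A + (- c * (A * q) + (- c * (A * A) + (c * (A * A * q) + (- (x - 1) * A + ((x - 1) * (A * q) + (1 * q + (- 1) * X)))))))
      / (v * (1 - q) * (1 - A))"
    by (simp add: algebra_simps)
  finally show ?thesis .
qed

lemma I_integrable:
  assumes a: "\<alpha> > 0" and x: "x > 0"
  shows "set_integrable lborel {0<..} (lnG_integrand x \<alpha>)"
proof -
  define c where "c = (x - 1) * (x - 2 * \<alpha>) / (2 * \<alpha>)"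
  define ps where "ps = [(c,\<alpha>),(-c,\<alpha>+1),(-c,2*\<alpha>),(c,2*\<alpha>+1),(-(x-1),\<alpha>),(x-1,\<alpha>+1),(1,1),(-1,x)]"
  define d where "d = min (exp (- 1) * (\<alpha> * exp (- \<alpha>))) ((1 - exp (- 1)) * (1 - exp (- \<alpha>)))"
  show ?thesis
  proof (rule quot_integrable[where ps=ps and n=3 and \<delta>="min \<alpha> (min 1 x)" and d=d
        and D="\<lambda>v. v * (1 - exp (- v)) * (1 - exp (- \<alpha> * v))"])
    show "lnG_integrand x \<alpha> \<in> borel_measurable borel" unfolding lnG_integrand_def by measurable
    show "min \<alpha> (min 1 x) > 0" using a x by simp
    show "\<forall>p\<in>set ps. snd p \<ge> min \<alpha> (min 1 x)" using a x unfolding ps_def by auto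
    show "\<forall>m<3. (\<Sum>p\<leftarrow>ps. fst p * snd p ^ m) = 0"
      unfolding ps_def c_def using a
      by (auto simp: less_Suc_eq numeral_3_eq_3 power2_eq_square field_simps)
    have e1: "exp (- 1::real) > 0" "1 - exp (- 1::real) > 0" by auto
    have e2: "\<alpha> * exp (- \<alpha>) > 0" "1 - exp (- \<alpha>) > 0" using a by auto
    show "d > 0" unfolding d_def using e1 e2 by simp
    show "v * (1 - exp (- v)) * (1 - exp (- \<alpha> * v)) \<ge> d * v ^ 3" if v: "0 < v" "v \<le> 1" for v
    proof -
      have h1: "1 - exp (- v) \<ge> exp (- 1) * v" using one_minus_exp_small[of 1 v] v by simp
      have h2: "1 - exp (- \<alpha> * v) \<ge> (\<alpha> * exp (- \<alpha>)) * v" using one_minus_exp_small[OF a v] .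
      have "(exp (- 1) * v) * ((\<alpha> * exp (- \<alpha>)) * v) \<le> (1 - exp (- v)) * (1 - exp (- \<alpha> * v))"
        using h1 h2 e2 v by (intro mult_mono) auto
      hence "v * ((exp (- 1) * v) * ((\<alpha> * exp (- \<alpha>)) * v)) \<le> v * ((1 - exp (- v)) * (1 - exp (- \<alpha> * v)))"
        using v by (intro mult_left_mono) auto
      moreover have "d * v ^ 3 \<le> v * ((exp (- 1) * v) * ((\<alpha> * exp (- \<alpha>)) * v))"
      proof -
        have "d \<le> exp (- 1) * (\<alpha> * exp (- \<alpha>))" unfolding d_def by simp
        hence "d * v ^ 3 \<le> (exp (- 1) * (\<alpha> * exp (- \<alpha>))) * v ^ 3" using v by (intro mult_right_mono) auto
        thus ?thesis by (simp add: power3_eq_cube mult_ac)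
      qed
      ultimately show ?thesis by (simp add: mult_ac)
    qed
    show "v * (1 - exp (- v)) * (1 - exp (- \<alpha> * v)) \<ge> d" if v: "v \<ge> 1" for v
    proof -
      have h1: "1 - exp (- v) \<ge> 1 - exp (- 1)" using one_minus_exp_large[of 1 v] v by simp
      have h2: "1 - exp (- \<alpha> * v) \<ge> 1 - exp (- \<alpha>)" using one_minus_exp_large[OF a v] .
      have "(1 - exp (- 1)) * (1 - exp (- \<alpha>)) \<le> (1 - exp (- v)) * (1 - exp (- \<alpha> * v))"
        using h1 h2 e1 e2 by (intro mult_mono) auto
      hence "1 * ((1 - exp (- 1)) * (1 - exp (- \<alpha>))) \<le> v * ((1 - exp (- v)) * (1 - exp (- \<alpha> * v)))"
        using v e1 e2 by (intro mult_mono) auto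
      moreover have "d \<le> (1 - exp (- 1)) * (1 - exp (- \<alpha>))" unfolding d_def by simp
      ultimately show ?thesis by (simp add: mult_ac)
    qed
    show "lnG_integrand x \<alpha> v = (\<Sum>p\<leftarrow>ps. fst p * exp (- snd p * v)) / (v * (1 - exp (- v)) * (1 - exp (- \<alpha> * v)))"
      if v: "v > 0" for v
    proof -
      have A: "1 - exp (- \<alpha> * v) \<noteq> 0" using one_minus_exp_pos[OF a v] by linarith
      have Q: "1 - exp (- v) \<noteq> 0" using v by simp
      have A0: "exp (- \<alpha> * v) \<noteq> 0" by simp
      define EA where "EA = exp (- \<alpha> * v)"
      define Eq where "Eq = exp (- v)"
      define Xe where "Xe = exp (- x * v)"
      have A': "EA \<noteq> 0" "EA \<noteq> 1" "Eq \<noteq> 1" "v \<noteq> 0" using A A0 Q v unfolding EA_def Eq_def by auto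
      show ?thesis unfolding lnG_integrand_def ps_def c_def[symmetric]
        apply (simp only: sum_list.Cons sum_list.Nil list.map fst_conv snd_conv exps_rewrite)
        apply (simp only: EA_def[symmetric] Eq_def[symmetric] Xe_def[symmetric])
        apply (subst alg_I[OF A'])
        by (simp add: algebra_simps)
    qed
  qed
qed



lemma alg_total:
  fixes A q X c x v Qn n \<alpha> :: real
  assumes A: "A \<noteq> 0" "A \<noteq> 1" and q: "q \<noteq> 1" and v: "v \<noteq> 0" and a: "\<alpha> \<noteq> 0"
  shows "c * ((A - A * Qn) / v) + (x - 1) * ((n / \<alpha> * A - (A - A * Qn) / (1 - A)) / v)
     + (n * ((1 - x) / \<alpha>) * A + (q - X) * (1 - Qn) / ((1 - q) * (1 - A))) / v
   = (1 - Qn) * (A / v * (c - (x - 1) / (1 - A) + (q / A - X / A) / ((1 - q) * (1 - A))))"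
proof -
  have A1: "1 - A \<noteq> 0" and q1: "1 - q \<noteq> 0" using A q by auto
  show ?thesis using A1 q1 A v a by (simp add: divide_simps) (simp add: algebra_simps)
qed

lemma alg_step:
  fixes A q X Qn v :: real
  assumes A: "A \<noteq> 1" and q: "q \<noteq> 1"
  shows "(n * s * A + (q - X) * (1 - Qn) / ((1 - q) * (1 - A))) / v + (s * A + (Qn * q - Qn * X) / (1 - A)) / v
    = ((n + 1) * s * A + (q - X) * (1 - q * Qn) / ((1 - q) * (1 - A))) / v"
proof -
  have A1: "1 - A \<noteq> 0" and q1: "1 - q \<noteq> 0" using A q by auto
  show ?thesis using A1 q1 by (simp add: divide_simps) (simp add: algebra_simps)
qed

lemma alg_Emdiff:
  fixes a b A P R D v :: real
  shows "((a - 1) * A - (A - P) / D) / v - ((b - 1) * A - (A - R) / D) / v = ((a - b) * A + (P - R) / D) / v"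
  by (simp add: divide_inverse algebra_simps)

lemma exp_k:
  fixes \<alpha> v :: real assumes "\<alpha> \<noteq> 0"
  shows "exp (- (((1 + real k) / \<alpha>) * \<alpha>) * v) = exp (- v) ^ k * exp (- v)"
proof -
  have e: "((1 + real k) / \<alpha>) * \<alpha> = 1 + real k" using assms by simp
  have "exp (- (((1 + real k) / \<alpha>) * \<alpha>) * v) = exp (real k * (- v)) * exp (- v)"
    unfolding e by (simp add: exp_add[symmetric] algebra_simps)
  thus ?thesis by (simp only: exp_of_nat_mult)
qed

lemma exp_xk:
  fixes \<alpha> v x :: real assumes "\<alpha> \<noteq> 0"
  shows "exp (- (((x + real k) / \<alpha>) * \<alpha>) * v) = exp (- v) ^ k * exp (- x * v)"
proof -
  have e: "((x + real k) / \<alpha>) * \<alpha> = x + real k" using assms by simp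
  have "exp (- (((x + real k) / \<alpha>) * \<alpha>) * v) = exp (real k * (- v)) * exp (- x * v)"
    unfolding e by (simp add: exp_add[symmetric] algebra_simps)
  thus ?thesis by (simp only: exp_of_nat_mult)
qed

lemma Em_sum:
  fixes \<alpha> v x :: real
  assumes a: "\<alpha> > 0" and v: "v > 0"
  shows "(\<Sum>k<n. Em \<alpha> ((1 + real k) / \<alpha>) v - Em \<alpha> ((x + real k) / \<alpha>) v)
    = (real n * ((1 - x) / \<alpha>) * exp (- \<alpha> * v) + (exp (- v) - exp (- x * v)) * (1 - exp (- v) ^ n)
        / ((1 - exp (- v)) * (1 - exp (- \<alpha> * v)))) / v"
proof (induction n)
  case 0 thus ?case by simp
next
  case (Suc n)
  have A: "exp (- \<alpha> * v) \<noteq> 1" using one_minus_exp_pos[OF a v] by linarith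
  have q: "exp (- v) \<noteq> 1" using v by simp
  have a0: "\<alpha> \<noteq> 0" using a by simp
  have d: "Em \<alpha> ((1 + real n) / \<alpha>) v - Em \<alpha> ((x + real n) / \<alpha>) v
     = ((1 - x) / \<alpha> * exp (- \<alpha> * v) + (exp (- v) ^ n * exp (- v) - exp (- v) ^ n * exp (- x * v)) / (1 - exp (- \<alpha> * v))) / v"
  proof -
    have "Em \<alpha> ((1 + real n) / \<alpha>) v - Em \<alpha> ((x + real n) / \<alpha>) v
      = (((1 + real n) / \<alpha> - (x + real n) / \<alpha>) * exp (- \<alpha> * v) + (exp (- (((1 + real n) / \<alpha>) * \<alpha>) * v) - exp (- (((x + real n) / \<alpha>) * \<alpha>) * v)) / (1 - exp (- \<alpha> * v))) / v"
      unfolding Em_def by (rule alg_Emdiff)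
    also have "(1 + real n) / \<alpha> - (x + real n) / \<alpha> = ((1 + real n) - (x + real n)) / \<alpha>"
      by (rule diff_divide_distrib[symmetric])
    also have "(1 + real n) - (x + real n) = 1 - x" by simp
    finally show ?thesis by (simp only: exp_k[OF a0] exp_xk[OF a0]) simp
  qed
  have "(\<Sum>k<Suc n. Em \<alpha> ((1 + real k) / \<alpha>) v - Em \<alpha> ((x + real k) / \<alpha>) v)
    = (real n * ((1 - x) / \<alpha>) * exp (- \<alpha> * v) + (exp (- v) - exp (- x * v)) * (1 - exp (- v) ^ n)
        / ((1 - exp (- v)) * (1 - exp (- \<alpha> * v)))) / v
      + ((1 - x) / \<alpha> * exp (- \<alpha> * v) + (exp (- v) ^ n * exp (- v) - exp (- v) ^ n * exp (- x * v)) / (1 - exp (- \<alpha> * v))) / v"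
    by (simp only: sum.lessThan_Suc Suc.IH d)
  also have "\<dots> = ((real n + 1) * ((1 - x) / \<alpha>) * exp (- \<alpha> * v) + (exp (- v) - exp (- x * v)) * (1 - exp (- v) * exp (- v) ^ n)
        / ((1 - exp (- v)) * (1 - exp (- \<alpha> * v)))) / v"
    by (rule alg_step[OF A q])
  finally show ?case by simp
qed



lemma set_integral_sum':
  fixes f :: "'i \<Rightarrow> real \<Rightarrow> real"
  assumes "finite K" "\<And>k. k \<in> K \<Longrightarrow> set_integrable lborel A (f k)"
  shows "set_integrable lborel A (\<lambda>v. \<Sum>k\<in>K. f k v) \<and>
         (LBINT v:A. (\<Sum>k\<in>K. f k v)) = (\<Sum>k\<in>K. LBINT v:A. f k v)"
  using assms
proof (induction K rule: finite_induct)
  case empty thus ?case by (simp add: set_integrable_def)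
next
  case (insert k K)
  have ik: "set_integrable lborel A (f k)" using insert by simp
  have iK: "set_integrable lborel A (\<lambda>v. \<Sum>k\<in>K. f k v)" and eK: "(LBINT v:A. (\<Sum>k\<in>K. f k v)) = (\<Sum>k\<in>K. LBINT v:A. f k v)"
    using insert by auto
  have s: "(\<lambda>v. \<Sum>k\<in>insert k K. f k v) = (\<lambda>v. f k v + (\<Sum>k\<in>K. f k v))"
    using insert by simp
  show ?case unfolding s using set_integral_add[OF ik iK] eK insert by simp
qed

lemma h_eq:
  fixes \<alpha> x v :: real
  assumes a: "\<alpha> > 0" and v: "v > 0"
  defines "c \<equiv> (x - 1) * (x - 2 * \<alpha>) / (2 * \<alpha>)"
  shows "c * Fr \<alpha> ((1 + real n / \<alpha>) * \<alpha>) v + (x - 1) * Em \<alpha> (1 + real n / \<alpha>) v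
     + (\<Sum>k<n. Em \<alpha> ((1 + real k) / \<alpha>) v - Em \<alpha> ((x + real k) / \<alpha>) v)
     = (1 - exp (- v) ^ n) * lnG_integrand x \<alpha> v"
proof -
  have a0: "\<alpha> \<noteq> 0" using a by simp
  have A: "exp (- \<alpha> * v) \<noteq> 1" using one_minus_exp_pos[OF a v] by linarith
  have q: "exp (- v) \<noteq> 1" using v by simp
  have e1: "exp (- ((1 + real n / \<alpha>) * \<alpha>) * v) = exp (- \<alpha> * v) * exp (- v) ^ n"
  proof -
    have "(1 + real n / \<alpha>) * \<alpha> = \<alpha> + real n" using a0 by (simp add: field_simps)
    hence "exp (- ((1 + real n / \<alpha>) * \<alpha>) * v) = exp (- \<alpha> * v) * exp (real n * (- v))"
      by (simp add: exp_add[symmetric] algebra_simps)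
    thus ?thesis by (simp only: exp_of_nat_mult)
  qed
  have e2: "1 + real n / \<alpha> - 1 = real n / \<alpha>" by simp
  have F: "Fr \<alpha> ((1 + real n / \<alpha>) * \<alpha>) v = (exp (- \<alpha> * v) - exp (- \<alpha> * v) * exp (- v) ^ n) / v"
    unfolding Fr_def e1 ..
  have E: "Em \<alpha> (1 + real n / \<alpha>) v = (real n / \<alpha> * exp (- \<alpha> * v) - (exp (- \<alpha> * v) - exp (- \<alpha> * v) * exp (- v) ^ n) / (1 - exp (- \<alpha> * v))) / v"
    unfolding Em_def e1 e2 ..
  have I: "lnG_integrand x \<alpha> v = exp (- \<alpha> * v) / v * (c - (x - 1) / (1 - exp (- \<alpha> * v))
      + (exp (- v) / exp (- \<alpha> * v) - exp (- x * v) / exp (- \<alpha> * v)) / ((1 - exp (- v)) * (1 - exp (- \<alpha> * v))))"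
    unfolding lnG_integrand_def c_def exps_rewrite ..
  show ?thesis unfolding F E I Em_sum[OF a v]
    by (rule alg_total) (use A q v a0 in auto)
qed

lemma L_eq:
  fixes \<alpha> x :: real
  assumes a: "\<alpha> > 0" and x: "x > 0"
  defines "c \<equiv> (x - 1) * (x - 2 * \<alpha>) / (2 * \<alpha>)"
  shows "(LBINT v:{0<..}. c * Fr \<alpha> ((1 + real n / \<alpha>) * \<alpha>) v + (x - 1) * Em \<alpha> (1 + real n / \<alpha>) v
     + (\<Sum>k<n. Em \<alpha> ((1 + real k) / \<alpha>) v - Em \<alpha> ((x + real k) / \<alpha>) v))
   = c * ln (1 + real n / \<alpha>) + (x - 1) * ln (Gamma (1 + real n / \<alpha>))
     + (\<Sum>k<n. ln (Gamma ((1 + real k) / \<alpha>)) - ln (Gamma ((x + real k) / \<alpha>)))"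
proof -
  have N: "1 + real n / \<alpha> > 0" using a by (simp add: add_pos_nonneg)
  have Na: "(1 + real n / \<alpha>) * \<alpha> > 0" using N a by simp
  have iF: "set_integrable lborel {0<..} (Fr \<alpha> ((1 + real n / \<alpha>) * \<alpha>))"
    by (rule Fr_integrable[OF a Na])
  have iE: "set_integrable lborel {0<..} (Em \<alpha> (1 + real n / \<alpha>))"
    by (rule Em_integrable[OF a N])
  have pk: "(1 + real k) / \<alpha> > 0" "(x + real k) / \<alpha> > 0" for k
    using a x by (auto intro!: divide_pos_pos add_pos_nonneg)
  have iD: "set_integrable lborel {0<..} (\<lambda>v. Em \<alpha> ((1 + real k) / \<alpha>) v - Em \<alpha> ((x + real k) / \<alpha>) v)" for k
    using Em_integrable[OF a pk(1)] Em_integrable[OF a pk(2)] by (rule set_integral_diff(1))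
  have eD: "(LBINT v:{0<..}. Em \<alpha> ((1 + real k) / \<alpha>) v - Em \<alpha> ((x + real k) / \<alpha>) v)
      = ln (Gamma ((1 + real k) / \<alpha>)) - ln (Gamma ((x + real k) / \<alpha>))" for k
    using set_integral_diff(2)[OF Em_integrable[OF a pk(1)] Em_integrable[OF a pk(2)]]
      Mal_eq[OF a pk(1)] Mal_eq[OF a pk(2)] unfolding Mal_def by simp
  from set_integral_sum'[of "{..<n}" "{0<..}" "\<lambda>k v. Em \<alpha> ((1 + real k) / \<alpha>) v - Em \<alpha> ((x + real k) / \<alpha>) v"] iD
  have iS: "set_integrable lborel {0<..} (\<lambda>v. \<Sum>k<n. Em \<alpha> ((1 + real k) / \<alpha>) v - Em \<alpha> ((x + real k) / \<alpha>) v)"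
    and eS: "(LBINT v:{0<..}. (\<Sum>k<n. Em \<alpha> ((1 + real k) / \<alpha>) v - Em \<alpha> ((x + real k) / \<alpha>) v))
       = (\<Sum>k<n. ln (Gamma ((1 + real k) / \<alpha>)) - ln (Gamma ((x + real k) / \<alpha>)))"
    using eD by auto
  have iF': "set_integrable lborel {0<..} (\<lambda>v. c * Fr \<alpha> ((1 + real n / \<alpha>) * \<alpha>) v)"
    using iF by (rule set_integrable_mult_right)
  have iE': "set_integrable lborel {0<..} (\<lambda>v. (x - 1) * Em \<alpha> (1 + real n / \<alpha>) v)"
    using iE by (rule set_integrable_mult_right)
  have iFE: "set_integrable lborel {0<..} (\<lambda>v. c * Fr \<alpha> ((1 + real n / \<alpha>) * \<alpha>) v + (x - 1) * Em \<alpha> (1 + real n / \<alpha>) v)"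
    using iF' iE' by (rule set_integral_add(1))
  have fr: "(LBINT v:{0<..}. Fr \<alpha> ((1 + real n / \<alpha>) * \<alpha>) v) = ln (1 + real n / \<alpha>)"
    using Frullani[OF a Na] N a by (simp add: ln_mult)
  have em: "(LBINT v:{0<..}. Em \<alpha> (1 + real n / \<alpha>) v) = ln (Gamma (1 + real n / \<alpha>))"
    using Mal_eq[OF a N] unfolding Mal_def .
  show ?thesis
    apply (subst set_integral_add(2)[OF iFE iS])
    apply (subst set_integral_add(2)[OF iF' iE'])
    using fr em eS by simp
qed

lemma DCT_part:
  fixes \<alpha> x :: real
  assumes a: "\<alpha> > 0" and x: "x > 0"
  shows "(\<lambda>n. LBINT v:{0<..}. (1 - exp (- v) ^ n) * lnG_integrand x \<alpha> v) \<longlonglongrightarrow> (LBINT v:{0<..}. lnG_integrand x \<alpha> v)"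
proof -
  define g where "g = (\<lambda>v. indicator {0<..} v *\<^sub>R lnG_integrand x \<alpha> v)"
  have ig: "integrable lborel g" using I_integrable[OF a x] unfolding g_def set_integrable_def .
  have mg: "g \<in> borel_measurable lborel" using ig by (rule borel_measurable_integrable)
  have eqs: "(LBINT v:{0<..}. (1 - exp (- v) ^ n) * lnG_integrand x \<alpha> v) = integral\<^sup>L lborel (\<lambda>v. (1 - exp (- v) ^ n) * g v)" for n
    unfolding set_lebesgue_integral_def g_def by (rule Bochner_Integration.integral_cong) auto
  have eq0: "(LBINT v:{0<..}. lnG_integrand x \<alpha> v) = integral\<^sup>L lborel g"
    unfolding set_lebesgue_integral_def g_def ..
  show ?thesis unfolding eqs eq0
  proof (rule integral_dominated_convergence[where w="\<lambda>v. norm (g v)"])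
    show "g \<in> borel_measurable lborel" by (fact mg)
    show "(\<lambda>v. (1 - exp (- v) ^ n) * g v) \<in> borel_measurable lborel" for n
      using mg by measurable
    show "integrable lborel (\<lambda>v. norm (g v))" using ig by (rule integrable_norm)
    show "AE v in lborel. (\<lambda>n. (1 - exp (- v) ^ n) * g v) \<longlonglongrightarrow> g v"
    proof (rule AE_I2)
      fix v :: real
      show "(\<lambda>n. (1 - exp (- v) ^ n) * g v) \<longlonglongrightarrow> g v"
      proof (cases "v > 0")
        case True
        have "norm (exp (- v)) < 1" using True by simp
        hence "(\<lambda>n. exp (- v) ^ n) \<longlonglongrightarrow> 0" by (rule LIMSEQ_power_zero)
        hence "(\<lambda>n. (1 - exp (- v) ^ n) * g v) \<longlonglongrightarrow> (1 - 0) * g v"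
          by (rule tendsto_mult[OF tendsto_diff[OF tendsto_const] tendsto_const])
        thus ?thesis by simp
      next
        case False thus ?thesis by (simp add: g_def)
      qed
    qed
    show "AE v in lborel. norm ((1 - exp (- v) ^ n) * g v) \<le> norm (g v)" for n
    proof (rule AE_I2)
      fix v :: real
      show "norm ((1 - exp (- v) ^ n) * g v) \<le> norm (g v)"
      proof (cases "v > 0")
        case True
        have "exp (- v) ^ n \<le> 1" using True by (intro power_le_one) auto
        moreover have "exp (- v) ^ n \<ge> 0" by simp
        ultimately have "\<bar>1 - exp (- v) ^ n\<bar> \<le> 1" by simp
        hence "\<bar>1 - exp (- v) ^ n\<bar> * \<bar>g v\<bar> \<le> 1 * \<bar>g v\<bar>" by (intro mult_right_mono) auto
        thus ?thesis by (simp add: abs_mult)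
      next
        case False thus ?thesis by (simp add: g_def)
      qed
    qed
  qed
qed

theorem mainTheorem14:
  fixes \<alpha> x :: real
  assumes "\<alpha> > 0" and "x > 0"
  shows "(\<lambda>n::nat. (1 + real n / \<alpha>) powr ((x - 1) * (x - 2 * \<alpha>) / (2 * \<alpha>))
            * Gamma (1 + real n / \<alpha>) powr (x - 1)
            * (\<Prod>k<n. Gamma ((1 + real k) / \<alpha>) / Gamma ((x + real k) / \<alpha>)))
         \<longlonglongrightarrow> G x \<alpha>"
proof -
  note a = assms(1) and x = assms(2)
  define c where "c = (x - 1) * (x - 2 * \<alpha>) / (2 * \<alpha>)"
  define Lv where "Lv = (\<lambda>n::nat. c * ln (1 + real n / \<alpha>) + (x - 1) * ln (Gamma (1 + real n / \<alpha>))
     + (\<Sum>k<n. ln (Gamma ((1 + real k) / \<alpha>)) - ln (Gamma ((x + real k) / \<alpha>))))"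
  have pk: "(1 + real k) / \<alpha> > 0" "(x + real k) / \<alpha> > 0" for k
    using a x by (auto intro!: divide_pos_pos add_pos_nonneg)
  have seq: "(1 + real n / \<alpha>) powr c * Gamma (1 + real n / \<alpha>) powr (x - 1)
            * (\<Prod>k<n. Gamma ((1 + real k) / \<alpha>) / Gamma ((x + real k) / \<alpha>)) = exp (Lv n)" for n
  proof -
    have N: "1 + real n / \<alpha> > 0" using a by (simp add: add_pos_nonneg)
    have GN: "Gamma (1 + real n / \<alpha>) > 0" using N by (rule Gamma_real_pos)
    have p1: "(1 + real n / \<alpha>) powr c = exp (c * ln (1 + real n / \<alpha>))"
      using N by (simp add: powr_def)
    have p2: "Gamma (1 + real n / \<alpha>) powr (x - 1) = exp ((x - 1) * ln (Gamma (1 + real n / \<alpha>)))"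
      using GN by (simp add: powr_def)
    have p3: "(\<Prod>k<n. Gamma ((1 + real k) / \<alpha>) / Gamma ((x + real k) / \<alpha>))
        = exp (\<Sum>k<n. ln (Gamma ((1 + real k) / \<alpha>)) - ln (Gamma ((x + real k) / \<alpha>)))"
      unfolding exp_sum[OF finite_lessThan]
    proof (rule prod.cong[OF refl])
      fix k assume "k \<in> {..<n}"
      have g1: "Gamma ((1 + real k) / \<alpha>) > 0" by (rule Gamma_real_pos[OF pk(1)])
      have g2: "Gamma ((x + real k) / \<alpha>) > 0" by (rule Gamma_real_pos[OF pk(2)])
      show "Gamma ((1 + real k) / \<alpha>) / Gamma ((x + real k) / \<alpha>)
          = exp (ln (Gamma ((1 + real k) / \<alpha>)) - ln (Gamma ((x + real k) / \<alpha>)))"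
        using g1 g2 by (simp add: exp_diff)
    qed
    show ?thesis unfolding p1 p2 p3 Lv_def by (simp add: exp_add)
  qed
  have hlim: "Lv \<longlonglongrightarrow> (LBINT v:{0<..}. lnG_integrand x \<alpha> v)"
  proof -
    have "Lv n = (LBINT v:{0<..}. (1 - exp (- v) ^ n) * lnG_integrand x \<alpha> v)" for n
    proof -
      have "Lv n = (LBINT v:{0<..}. c * Fr \<alpha> ((1 + real n / \<alpha>) * \<alpha>) v + (x - 1) * Em \<alpha> (1 + real n / \<alpha>) v
          + (\<Sum>k<n. Em \<alpha> ((1 + real k) / \<alpha>) v - Em \<alpha> ((x + real k) / \<alpha>) v))"
        unfolding Lv_def c_def using L_eq[OF a x, of n] by simp
      also have "\<dots> = (LBINT v:{0<..}. (1 - exp (- v) ^ n) * lnG_integrand x \<alpha> v)"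
        unfolding c_def by (rule set_lebesgue_integral_cong, simp, intro allI impI, rule h_eq[OF a], simp)
      finally show ?thesis .
    qed
    hence "Lv = (\<lambda>n. LBINT v:{0<..}. (1 - exp (- v) ^ n) * lnG_integrand x \<alpha> v)" by (rule ext)
    thus ?thesis using DCT_part[OF a x] by simp
  qed
  have "(\<lambda>n. exp (Lv n)) \<longlonglongrightarrow> exp (LBINT v:{0<..}. lnG_integrand x \<alpha> v)"
    using hlim by (rule tendsto_exp)
  thus ?thesis unfolding seq[unfolded c_def, symmetric] G_def .
qed


end
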